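(* Under the standing setup, for all $t\ge0$ and $u_0\in\mathbb R^d$, $\mathscr S(t)u_0=\sup_{\pi\in P_t}\mathcal E_\pi u_0=\sup_{\theta\in Q_t}S_\theta u_0.$
   Context: Standing setup: $d\in\mathbb N$; vectors in $\mathbb R^d$; inequalities and suprema of vectors are componentwise; reals are identified with constant vectors. A $Q$-matrix is $q\in\mathbb R^{d\times d}$ with $q_{ii}\le0$, $q_{ij}\ge0$ ($i\ne j$), $\sum_jq_{ij}=0$. Let $\mathcal P$ be a set of $Q$-matrices and $f=(f_q)_{q\in\mathcal P}\subset\mathbb R^d$ with $\sup_{q\in\mathcal P}f_q=f_{q_0}=0$ for some $q_0\in\mathcal P$, such that $\mathcal Qu:=\sup_{q\in\mathcal P}(qu+f_q)$ is finite for every $u\in\mathbb R^d$. For $q\in\mathcal P$, $t\ge0$: $S_q(t)u_0:=e^{tq}u_0+\int_0^te^{sq}f_q\,ds$. For $h\ge0$: $\mathcal E_hu_0:=\sup_{q\in\mathcal P}S_q(h)u_0$. $P$ is the set of finite subsets $\pi\subset[0,\infty)$ with $0\in\pi$; $P_t:=\{\pi\in P:\max\pi=t\}$. For $\pi=\{t_0,\dots,t_m\}$ with $0=t_0<\dots<t_m$, $m\ge1$, $\mathcal E_\pi:=\mathcal E_{t_1-t_0}\circ\cdots\circ\mathcal E_{t_m-t_{m-1}}$, and $\mathcal E_{\{0\}}:=\mathcal E_0$. The Nisio semigroup of $(\mathcal P,f)$ is $\mathscr S(t)u_0:=\sup_{\pi\in P_t}\mathcal E_\pi u_0$. For $\mathbf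 q=(q^1,\dots,q^d)\in\mathcal P^d$ and $t\ge0$, define the affine map $S_{\mathbf q}(t)\colon\mathbb R^d\to\mathbb R^d$ by $(S_{\mathbf q}(t)u_0)_i:=(S_{q^i}(t)u_0)_i$ for $i=1,\dots,d$. Let $Q_t:=\{(\mathbf q_k,h_k)_{k=1,\dots,m}\in(\mathcal P^d\times[0,t])^m : m\in\mathbb N,\ \sum_{k=1}^mh_k=t\}$, and for $\theta=(\mathbf q_k,h_k)_{k=1,\dots,m}\in Q_t$ set $S_\theta u_0:=S_{\mathbf q_1}(h_1)\circ\cdots\circ S_{\mathbf q_m}(h_m)u_0$. *)

theory Defs
  imports "HOL-Analysis.Analysis"
begin

text \<open>Dimension d is the cardinality of the finite index type 'n; vectors in R^d
  are real^'n, d x d matrices are real^'n^'n (row index first).\<close>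

primrec matpow :: "real^'n^'n \<Rightarrow> nat \<Rightarrow> real^'n^'n" where
  "matpow A 0 = mat 1"
| "matpow A (Suc k) = A ** matpow A k"

definition mexp :: "real^'n^'n \<Rightarrow> real^'n^'n" where
  "mexp A = (\<Sum>k. (1 / fact k) *\<^sub>R matpow A k)"

definition is_Qmatrix :: "real^'n^'n \<Rightarrow> bool" where
  "is_Qmatrix q \<longleftrightarrow> (\<forall>i. q$i$i \<le> 0) \<and> (\<forall>i j. i \<noteq> j \<longrightarrow> q$i$j \<ge> 0)
     \<and> (\<forall>i. (\<Sum>j\<in>UNIV. q$i$j) = 0)"

definition vsup :: "(real^'n) set \<Rightarrow> real^'n" where
  "vsup A = (\<chi> i. Sup ((\<lambda>v. v$i) ` A))"

definition Ssg :: "real^'n^'n \<Rightarrow> real^'n \<Rightarrow> real \<Rightarrow> real^'n \<Rightarrow> real^'n" where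
  "Ssg q fq t u0 = mexp (t *\<^sub>R q) *v u0 + integral {0..t} (\<lambda>s. mexp (s *\<^sub>R q) *v fq)"

definition Eop :: "(real^'n^'n) set \<Rightarrow> (real^'n^'n \<Rightarrow> real^'n) \<Rightarrow> real \<Rightarrow> real^'n \<Rightarrow> real^'n" where
  "Eop P f h u0 = vsup ((\<lambda>q. Ssg q (f q) h u0) ` P)"

definition Parts :: "real \<Rightarrow> real set set" where
  "Parts t = {\<pi>. finite \<pi> \<and> \<pi> \<subseteq> {0..} \<and> 0 \<in> \<pi> \<and> Max \<pi> = t}"

definition increments :: "real list \<Rightarrow> real list" where
  "increments ts = map (\<lambda>(a, b). b - a) (zip ts (tl ts))"

definition Epart :: "(real^'n^'n) set \<Rightarrow> (real^'n^'n \<Rightarrow> real^'n) \<Rightarrow> real set \<Rightarrow> real^'n \<Rightarrow> real^'n" where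
  "Epart P f \<pi> u0 =
     (if \<pi> = {0} then Eop P f 0 u0
      else foldr (\<lambda>h v. Eop P f h v) (increments (sorted_list_of_set \<pi>)) u0)"

definition Nisio :: "(real^'n^'n) set \<Rightarrow> (real^'n^'n \<Rightarrow> real^'n) \<Rightarrow> real \<Rightarrow> real^'n \<Rightarrow> real^'n" where
  "Nisio P f t u0 = vsup ((\<lambda>\<pi>. Epart P f \<pi> u0) ` Parts t)"

definition Svec :: "('n \<Rightarrow> real^'n^'n) \<Rightarrow> (real^'n^'n \<Rightarrow> real^'n) \<Rightarrow> real \<Rightarrow> real^'n \<Rightarrow> real^'n" where
  "Svec qs f t u0 = (\<chi> i. (Ssg (qs i) (f (qs i)) t u0) $ i)"

definition Qseqs :: "(real^'n^'n) set \<Rightarrow> real \<Rightarrow> (('n \<Rightarrow> real^'n^'n) \<times> real) list set" where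
  "Qseqs P t = {\<theta>. \<theta> \<noteq> [] \<and> (\<forall>(qs, h) \<in> set \<theta>. (\<forall>i. qs i \<in> P) \<and> h \<in> {0..t})
                   \<and> sum_list (map snd \<theta>) = t}"

definition Sseq :: "(real^'n^'n \<Rightarrow> real^'n) \<Rightarrow> (('n \<Rightarrow> real^'n^'n) \<times> real) list \<Rightarrow> real^'n \<Rightarrow> real^'n" where
  "Sseq f \<theta> u0 = foldr (\<lambda>(qs, h) v. Svec qs f h v) \<theta> u0"

end

theory Submission
  imports Defs
begin

lemma matpow_entry_bound:
  fixes A :: "real^'n^'n"
  assumes "\<And>i j. \<bar>A$i$j\<bar> \<le> m"
  shows "\<bar>matpow A k $ i $ j\<bar> \<le> (real CARD('n) * m)^k"
proof (induction k arbitrary: i j)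
  case 0
  show ?case by (simp add: mat_def)
next
  case (Suc k)
  have "\<bar>matpow A (Suc k) $i$j\<bar> = \<bar>\<Sum>l\<in>UNIV. A$i$l * matpow A k $l$j\<bar>"
    by (simp add: matrix_matrix_mult_def)
  also have "\<dots> \<le> (\<Sum>l\<in>UNIV. \<bar>A$i$l * matpow A k $l$j\<bar>)" by (rule sum_abs)
  also have "\<dots> \<le> (\<Sum>l\<in>(UNIV::'n set). m * (real CARD('n) * m)^k)"
    apply (rule sum_mono)
    subgoal for l using assms[of i l] Suc[of l j] by (auto simp: abs_mult intro!: mult_mono)
    done
  also have "\<dots> = real CARD('n) * m * (real CARD('n) * m)^k" by simp
  finally show ?case by simp
qed

lemma mexp_entry_summable:
  fixes A :: "real^'n^'n"
  shows "summable (\<lambda>k. \<bar>matpow A k $ i $ j / fact k\<bar>)"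
proof -
  define m where "m = (\<Sum>i\<in>UNIV. \<Sum>j\<in>UNIV. \<bar>A$i$j\<bar>)"
  have bm: "\<bar>A$i$j\<bar> \<le> m" for i j
  proof -
    have "\<bar>A$i$j\<bar> \<le> (\<Sum>j\<in>UNIV. \<bar>A$i$j\<bar>)"
      by (rule member_le_sum) auto
    also have "\<dots> \<le> m" unfolding m_def
      by (rule member_le_sum[where f="\<lambda>i. \<Sum>j\<in>UNIV. \<bar>A$i$j\<bar>"]) (auto intro: sum_nonneg)
    finally show ?thesis .
  qed
  show ?thesis
  proof (rule summable_comparison_test[OF _ summable_exp[of "real CARD('n) * m"]])
    show "\<exists>N. \<forall>n\<ge>N. norm \<bar>matpow A n $ i $ j / fact n\<bar> \<le> inverse (fact n) * (real CARD('n) * m) ^ n"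
      using matpow_entry_bound[OF bm]
      by (auto simp: divide_inverse abs_mult intro!: exI[of _ 0] mult_left_mono)
  qed
qed

lemma mexp_sums:
  fixes A :: "real^'n^'n"
  shows "(\<lambda>k. (1 / fact k) *\<^sub>R matpow A k) sums (\<chi> i j. \<Sum>k. matpow A k $ i $ j / fact k)"
proof -
  have s: "(\<lambda>k. matpow A k $ i $ j / fact k) sums (\<Sum>k. matpow A k $ i $ j / fact k)" for i j
    by (rule summable_sums[OF summable_rabs_cancel[OF mexp_entry_summable]])
  have c: "(\<Sum>k<n. (1 / fact k) *\<^sub>R matpow A k) $ i $ j = (\<Sum>k<n. matpow A k $ i $ j / fact k)" for n i j
    by (simp only: sum_component vector_scaleR_component) simp
  show ?thesis unfolding sums_def
  proof (rule vec_tendstoI, rule vec_tendstoI)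
    fix i j
    show "(\<lambda>n. (\<Sum>k<n. (1 / fact k) *\<^sub>R matpow A k) $ i $ j) \<longlonglongrightarrow> (\<chi> i j. \<Sum>k. matpow A k $ i $ j / fact k) $ i $ j"
      unfolding c vec_lambda_beta using s[of i j] unfolding sums_def .
  qed
qed

lemma mexp_eq: "mexp A = (\<chi> i j. \<Sum>k. matpow A k $ i $ j / fact k)"
  unfolding mexp_def using sums_unique[OF mexp_sums[of A]] by simp

lemma mexp_entry: "mexp A $ i $ j = (\<Sum>k. matpow A k $ i $ j / fact k)"
  by (simp add: mexp_eq)

lemma mexp_entry_sums: "(\<lambda>k. matpow A k $ i $ j / fact k) sums (mexp A $ i $ j)"
  unfolding mexp_entry
  by (rule summable_sums[OF summable_rabs_cancel[OF mexp_entry_summable]])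

lemma matpow_rows:
  fixes B :: "real^'n^'n"
  assumes "\<And>i. (\<Sum>j\<in>UNIV. B$i$j) = 0"
  shows "matpow B k *v vec 1 = (if k = 0 then vec 1 else 0)"
proof (induction k)
  case 0 then show ?case by simp
next
  case (Suc k)
  have B1: "B *v vec 1 = 0"
    using assms by (simp add: matrix_vector_mult_def vec_eq_iff)
  have "matpow B (Suc k) *v vec 1 = B *v (matpow B k *v vec 1)"
    by (simp add: matrix_vector_mul_assoc)
  also have "\<dots> = 0" using Suc B1 by (simp add: matrix_vector_mult_def vec_eq_iff)
  finally show ?case by simp
qed

lemma mexp_rows:
  fixes B :: "real^'n^'n"
  assumes "\<And>i. (\<Sum>j\<in>UNIV. B$i$j) = 0"
  shows "(\<Sum>j\<in>UNIV. mexp B $ i $ j) = 1"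
proof -
  have r: "(\<Sum>j\<in>UNIV. matpow B k $ i $ j) = (if k = 0 then 1 else 0)" for k
    using arg_cong[OF matpow_rows[OF assms, of k], of "\<lambda>v. v $ i"]
    by (simp add: matrix_vector_mult_def split: if_splits)
  have sm: "summable (\<lambda>k. matpow B k $ i $ j / fact k)" for j
    by (rule summable_rabs_cancel[OF mexp_entry_summable])
  have e: "(\<lambda>k. (if k = 0 then 1 else 0) / fact k) = (\<lambda>k. if k = 0 then (1::real) else 0)"
    by (rule ext) simp
  have "(\<Sum>j\<in>UNIV. mexp B $ i $ j) = (\<Sum>j\<in>UNIV. \<Sum>k. matpow B k $ i $ j / fact k)"
    by (simp add: mexp_entry)
  also have "\<dots> = (\<Sum>k. \<Sum>j\<in>UNIV. matpow B k $ i $ j / fact k)"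
    by (rule suminf_sum[symmetric]) (rule sm)
  also have "\<dots> = (\<Sum>k. if k = 0 then 1 else 0)"
    by (simp add: sum_divide_distrib[symmetric] r e)
  also have "\<dots> = 1"
    using sums_single[of 0 "\<lambda>_. 1::real"] sums_unique by fastforce
  finally show ?thesis .
qed

lemma comb_id:
  fixes M :: "nat \<Rightarrow> 'a::real_vector"
  shows "(\<Sum>j\<le>Suc k. (real (Suc k choose j) * a^(Suc k - j)) *\<^sub>R M j)
     = (\<Sum>j\<le>k. (real (k choose j) * a^(k-j)) *\<^sub>R M (Suc j))
       + a *\<^sub>R (\<Sum>j\<le>k. (real (k choose j) * a^(k-j)) *\<^sub>R M j)"
proof -
  have 1: "(\<Sum>j\<le>Suc k. (real (Suc k choose j) * a^(Suc k - j)) *\<^sub>R M j)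
      = a^(Suc k) *\<^sub>R M 0 + (\<Sum>j\<le>k. (real (k choose j) * a^(k - j)) *\<^sub>R M (Suc j))
       + (\<Sum>j\<le>k. (real (k choose Suc j) * a^(k - j)) *\<^sub>R M (Suc j))"
    by (subst sum.atMost_Suc_shift) (simp add: distrib_right scaleR_add_left sum.distrib)
  have 2: "(\<Sum>j\<le>k. (real (k choose Suc j) * a^(k - j)) *\<^sub>R M (Suc j))
       = (\<Sum>j<k. (real (k choose Suc j) * a^(k - j)) *\<^sub>R M (Suc j))"
    by (simp add: lessThan_Suc_atMost[symmetric])
  have 3: "a *\<^sub>R (\<Sum>j\<le>k. (real (k choose j) * a^(k-j)) *\<^sub>R M j)
      = (\<Sum>j\<le>k. (real (k choose j) * a^(Suc k-j)) *\<^sub>R M j)"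
    by (auto simp: scaleR_sum_right Suc_diff_le mult_ac intro!: sum.cong)
  have 4: "(\<Sum>j\<le>k. (real (k choose j) * a^(Suc k-j)) *\<^sub>R M j) = a^(Suc k) *\<^sub>R M 0 + (\<Sum>j<k. (real (k choose Suc j) * a^(k - j)) *\<^sub>R M (Suc j))"
    by (auto simp: sum.atMost_shift Suc_diff_le Suc_diff_Suc intro!: sum.cong simp flip: power_Suc)
  show ?thesis unfolding 1 2 3 4 by (simp add: algebra_simps)
qed

lemma matrix_mul_sum_right:
  fixes X :: "real^'n^'n"
  shows "X ** sum g S = (\<Sum>j\<in>S. X ** g j)"
  by (induction S rule: infinite_finite_induct) (auto simp: matrix_add_ldistrib)

lemma matrix_add_rdistrib':
  fixes A B C :: "real^'n^'n"
  shows "(A + B) ** C = A ** C + B ** C"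
  by (simp add: matrix_matrix_mult_def vec_eq_iff distrib_right sum.distrib)

lemma matpow_binom:
  fixes X :: "real^'n^'n"
  shows "matpow (X + a *\<^sub>R mat 1) k = (\<Sum>j\<le>k. (real (k choose j) * a^(k-j)) *\<^sub>R matpow X j)"
proof (induction k)
  case 0 then show ?case by simp
next
  case (Suc k)
  let ?S = "(\<Sum>j\<le>k. (real (k choose j) * a^(k-j)) *\<^sub>R matpow X j)"
  have "matpow (X + a *\<^sub>R mat 1) (Suc k) = (X + a *\<^sub>R mat 1) ** ?S" using Suc by simp
  also have "\<dots> = X ** ?S + a *\<^sub>R ?S"
    by (simp add: matrix_add_rdistrib' scalar_matrix_assoc[symmetric])
  also have "X ** ?S = (\<Sum>j\<le>k. (real (k choose j) * a^(k-j)) *\<^sub>R matpow X (Suc j))"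
    by (simp add: matrix_mul_sum_right matrix_scalar_ac scalar_matrix_assoc[symmetric])
  finally show ?case by (simp only: comb_id)
qed

lemma matpow_nonneg:
  fixes X :: "real^'n^'n"
  assumes "\<And>i j. X$i$j \<ge> 0"
  shows "matpow X k $ i $ j \<ge> 0"
  by (induction k arbitrary: i j) (auto simp: mat_def matrix_matrix_mult_def assms intro!: sum_nonneg)

lemma mexp_shift:
  fixes X :: "real^'n^'n"
  shows "mexp (X + a *\<^sub>R mat 1) $ i $ j = mexp X $ i $ j * exp a"
proof -
  let ?al = "\<lambda>l. matpow X l $ i $ j / fact l"
  let ?be = "\<lambda>m. a^m / fact m"
  have sa: "summable (\<lambda>k. norm (?al k))" using mexp_entry_summable[of X i j] by simp
  have sb: "summable (\<lambda>k. norm (?be k))"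
    using summable_exp[of "\<bar>a\<bar>"] by (simp add: abs_mult power_abs divide_inverse mult.commute)
  have ea: "exp a = (\<Sum>m. ?be m)" by (simp add: exp_def divide_inverse mult.commute)
  have c: "(\<lambda>k. \<Sum>l\<le>k. ?al l * ?be (k - l)) sums ((\<Sum>k. ?al k) * (\<Sum>k. ?be k))"
    by (rule Cauchy_product_sums[OF sa sb])
  have e: "matpow (X + a *\<^sub>R mat 1) k $ i $ j / fact k = (\<Sum>l\<le>k. ?al l * ?be (k - l))" for k
  proof -
    have "matpow (X + a *\<^sub>R mat 1) k $ i $ j / fact k
        = (\<Sum>l\<le>k. real (k choose l) * a^(k-l) * matpow X l $ i $ j) / fact k"
      by (simp add: matpow_binom sum_component)
    also have "\<dots> = (\<Sum>l\<le>k. ?al l * ?be (k - l))"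
      unfolding sum_divide_distrib
    proof (rule sum.cong[OF refl])
      fix l assume "l \<in> {..k}"
      then have lk: "l \<le> k" by simp
      have "real (k choose l) = fact k / (fact l * fact (k - l))"
        using binomial_fact[OF lk] by simp
      then show "real (k choose l) * a ^ (k - l) * matpow X l $ i $ j / fact k = ?al l * ?be (k - l)"
        by (simp add: field_simps)
    qed
    finally show ?thesis .
  qed
  have "(\<lambda>k. matpow (X + a *\<^sub>R mat 1) k $ i $ j / fact k) sums (mexp X $ i $ j * exp a)"
    using c unfolding e ea mexp_entry .
  then show ?thesis using mexp_entry_sums sums_unique2 by blast
qed

lemma mexp_Q_nonneg:
  fixes q :: "real^'n^'n"
  assumes "is_Qmatrix q" "h \<ge> 0"
  shows "mexp (h *\<^sub>R q) $ i $ j \<ge> 0"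
proof -
  define c where "c = (\<Sum>i\<in>UNIV. \<bar>q$i$i\<bar>)"
  have ci: "\<bar>q$i$i\<bar> \<le> c" for i unfolding c_def by (rule member_le_sum) auto
  define X where "X = h *\<^sub>R (q + c *\<^sub>R mat 1)"
  have Xn: "X$i$j \<ge> 0" for i j
    using assms ci[of i] unfolding X_def is_Qmatrix_def
    by (cases "i = j") (auto simp: mat_def)
  have "h *\<^sub>R q = X + (- (h * c)) *\<^sub>R mat 1"
    unfolding X_def by (simp add: algebra_simps)
  then have "mexp (h *\<^sub>R q) $ i $ j = mexp X $ i $ j * exp (- (h * c))"
    by (simp only: mexp_shift)
  moreover have "mexp X $ i $ j \<ge> 0"
    unfolding mexp_entry
    using summable_rabs_cancel[OF mexp_entry_summable[of X i j]]
    by (intro suminf_nonneg) (auto intro!: divide_nonneg_pos matpow_nonneg Xn)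
  ultimately show ?thesis by simp
qed

lemma Q_rows: "is_Qmatrix q \<Longrightarrow> (\<Sum>j\<in>UNIV. (h *\<^sub>R q)$i$j) = 0"
  unfolding is_Qmatrix_def by (simp add: sum_distrib_left[symmetric])

lemma mexp_Q_rows: "is_Qmatrix q \<Longrightarrow> (\<Sum>j\<in>UNIV. mexp (h *\<^sub>R q) $ i $ j) = 1"
  by (rule mexp_rows) (rule Q_rows)

lemma Ssg_integral_nonpos:
  fixes q :: "real^'n^'n"
  assumes "is_Qmatrix q" "\<And>j. fq $ j \<le> 0"
  shows "integral {0..h} (\<lambda>s. mexp (s *\<^sub>R q) *v fq) $ i \<le> 0"
proof (cases "(\<lambda>s. mexp (s *\<^sub>R q) *v fq) integrable_on {0..h}")
  case True
  have le: "(mexp (s *\<^sub>R q) *v fq) \<bullet> axis i 1 \<le> (0::real^'n) \<bullet> axis i 1" if "s \<in> {0..h}" for s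
  proof -
    have "(mexp (s *\<^sub>R q) *v fq) $ i \<le> 0"
      unfolding matrix_vector_mult_def using that assms
      by (auto intro!: sum_nonpos mult_nonneg_nonpos mexp_Q_nonneg)
    then show ?thesis by (simp add: inner_axis)
  qed
  have "integral {0..h} (\<lambda>s. mexp (s *\<^sub>R q) *v fq) \<bullet> axis i 1 \<le> integral {0..h} (\<lambda>s. 0::real^'n) \<bullet> axis i 1"
    by (rule integral_component_le[OF _ True integrable_0 le]) (auto simp: axis_in_Basis_iff)
  then show ?thesis by (simp add: inner_axis)
next
  case False
  then show ?thesis by (simp add: not_integrable_integral)
qed

lemma Ssg_comp: "Ssg q fq h u $ i = (\<Sum>j\<in>UNIV. mexp (h *\<^sub>R q) $ i $ j * u $ j)
     + integral {0..h} (\<lambda>s. mexp (s *\<^sub>R q) *v fq) $ i"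
  by (simp add: Ssg_def matrix_vector_mult_def)

lemma Ssg_mono:
  assumes "is_Qmatrix q" "h \<ge> 0" "\<And>j. u $ j \<le> v $ j"
  shows "Ssg q fq h u $ i \<le> Ssg q fq h v $ i"
  unfolding Ssg_comp using assms
  by (auto intro!: sum_mono mult_left_mono mexp_Q_nonneg)

lemma Ssg_shift:
  assumes "is_Qmatrix q"
  shows "Ssg q fq h (u + vec c) $ i = Ssg q fq h u $ i + c"
proof -
  have "(\<Sum>j\<in>UNIV. mexp (h *\<^sub>R q) $ i $ j * (u + vec c) $ j)
     = (\<Sum>j\<in>UNIV. mexp (h *\<^sub>R q) $ i $ j * u $ j) + c * (\<Sum>j\<in>UNIV. mexp (h *\<^sub>R q) $ i $ j)"
    by (simp add: distrib_right sum.distrib sum_distrib_left mult_ac)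
  then show ?thesis unfolding Ssg_comp using mexp_Q_rows[OF assms] by simp
qed

lemma Ssg_const_le:
  assumes "is_Qmatrix q" "\<And>j. fq $ j \<le> 0"
  shows "Ssg q fq h (vec c) $ i \<le> c"
proof -
  have "(\<Sum>j\<in>UNIV. mexp (h *\<^sub>R q) $ i $ j * vec c $ j) = c"
    using mexp_Q_rows[OF assms(1)] by (simp add: sum_distrib_right[symmetric])
  then show ?thesis unfolding Ssg_comp using Ssg_integral_nonpos[OF assms] by simp
qed

lemma mexp_zero: "mexp (0::real^'n^'n) = mat 1"
proof -
  have "(\<lambda>k. (1 / fact k) *\<^sub>R matpow (0::real^'n^'n) k) = (\<lambda>k. if k = 0 then mat 1 else 0)"
    by (rule ext) (case_tac k, auto)
  then show ?thesis unfolding mexp_def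
    using sums_unique[OF sums_single[of 0 "\<lambda>_. mat 1::real^'n^'n"]] by simp
qed

lemma Ssg_zero: "Ssg q fq 0 u = u"
  by (simp add: Ssg_def mexp_zero)

lemma Svec_comp: "Svec qs f h u $ i = Ssg (qs i) (f (qs i)) h u $ i"
  by (simp add: Svec_def)

lemma Svec_mono:
  assumes "\<forall>q\<in>P. is_Qmatrix q" "\<forall>i. qs i \<in> P" "h \<ge> 0" "\<And>j. u $ j \<le> v $ j"
  shows "Svec qs f h u $ i \<le> Svec qs f h v $ i"
  unfolding Svec_comp using assms by (intro Ssg_mono) auto

lemma Svec_approx:
  assumes "\<forall>q\<in>P. is_Qmatrix q" "\<forall>i. qs i \<in> P" "h \<ge> 0" "\<And>j. v $ j - e \<le> u $ j"
  shows "Svec qs f h v $ i - e \<le> Svec qs f h u $ i"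
proof -
  have Q: "is_Qmatrix (qs i)" using assms by auto
  have "Ssg (qs i) (f (qs i)) h (v + vec (-e)) $ i \<le> Ssg (qs i) (f (qs i)) h u $ i"
    using assms Q by (intro Ssg_mono) auto
  then show ?thesis unfolding Svec_comp using Ssg_shift[OF Q] by simp
qed

lemma Svec_bound:
  assumes "\<forall>q\<in>P. is_Qmatrix q" "\<forall>q\<in>P. \<forall>j. f q $ j \<le> 0" "\<forall>i. qs i \<in> P" "h \<ge> 0" "\<And>j. u $ j \<le> c"
  shows "Svec qs f h u $ i \<le> c"
proof -
  have Q: "is_Qmatrix (qs i)" using assms by auto
  have "Ssg (qs i) (f (qs i)) h u $ i \<le> Ssg (qs i) (f (qs i)) h (vec c) $ i"
    using assms Q by (intro Ssg_mono) auto
  also have "\<dots> \<le> c" using Q assms by (intro Ssg_const_le) auto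
  finally show ?thesis unfolding Svec_comp .
qed

lemma Svec_zero: "Svec qs f 0 u = u"
  by (simp add: Svec_def Ssg_zero)

lemma Eop_comp: "Eop P f h u $ i = Sup ((\<lambda>q. Ssg q (f q) h u $ i) ` P)"
  by (simp add: Eop_def vsup_def image_image)

lemma Ssg_bdd:
  assumes "\<forall>q\<in>P. is_Qmatrix q" "\<forall>q\<in>P. \<forall>j. f q $ j \<le> 0" "h \<ge> 0" "\<And>j. u $ j \<le> c"
  shows "\<forall>q\<in>P. Ssg q (f q) h u $ i \<le> c"
proof
  fix q assume q: "q \<in> P"
  have "Svec (\<lambda>_. q) f h u $ i \<le> c" using assms q by (intro Svec_bound[of P]) auto
  then show "Ssg q (f q) h u $ i \<le> c" by (simp add: Svec_comp)
qed

lemma ex_bound: "\<exists>c. \<forall>j. (u::real^'n) $ j \<le> c"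
proof
  show "\<forall>j. u $ j \<le> (\<Sum>j\<in>UNIV. \<bar>u$j\<bar>)"
  proof
    fix j
    have "u $ j \<le> \<bar>u $ j\<bar>" by simp
    also have "\<dots> \<le> (\<Sum>j\<in>UNIV. \<bar>u$j\<bar>)" by (rule member_le_sum) auto
    finally show "u $ j \<le> (\<Sum>j\<in>UNIV. \<bar>u$j\<bar>)" .
  qed
qed

lemma Ssg_bdd_above:
  assumes "\<forall>q\<in>P. is_Qmatrix q" "\<forall>q\<in>P. \<forall>j. f q $ j \<le> 0" "h \<ge> 0"
  shows "bdd_above ((\<lambda>q. Ssg q (f q) h u $ i) ` P)"
proof -
  obtain c where "\<forall>j. u $ j \<le> c" using ex_bound by blast
  then show ?thesis using Ssg_bdd[OF assms] by (auto intro!: bdd_aboveI[of _ c])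
qed

lemma Eop_ge:
  assumes "\<forall>q\<in>P. is_Qmatrix q" "\<forall>q\<in>P. \<forall>j. f q $ j \<le> 0" "h \<ge> 0" "\<forall>i. qs i \<in> P"
  shows "Svec qs f h u $ i \<le> Eop P f h u $ i"
  unfolding Eop_comp Svec_comp
  using assms by (intro cSup_upper Ssg_bdd_above) auto

lemma Eop_le:
  assumes "\<forall>q\<in>P. is_Qmatrix q" "\<forall>q\<in>P. \<forall>j. f q $ j \<le> 0" "h \<ge> 0" "P \<noteq> {}" "\<And>j. u $ j \<le> c"
  shows "Eop P f h u $ i \<le> c"
  unfolding Eop_comp using Ssg_bdd[OF assms(1,2,3,5)] assms(4)
  by (intro cSup_least) auto

lemma Eop_mono:
  assumes "\<forall>q\<in>P. is_Qmatrix q" "\<forall>q\<in>P. \<forall>j. f q $ j \<le> 0" "h \<ge> 0" "P \<noteq> {}" "\<And>j. u $ j \<le> v $ j"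
  shows "Eop P f h u $ i \<le> Eop P f h v $ i"
  unfolding Eop_comp
proof (rule cSup_least)
  show "(\<lambda>q. Ssg q (f q) h u $ i) ` P \<noteq> {}" using assms by auto
  fix x assume "x \<in> (\<lambda>q. Ssg q (f q) h u $ i) ` P"
  then obtain q where q: "q \<in> P" "x = Ssg q (f q) h u $ i" by auto
  have "x \<le> Ssg q (f q) h v $ i" using q assms by (auto intro: Ssg_mono)
  also have "\<dots> \<le> Sup ((\<lambda>q. Ssg q (f q) h v $ i) ` P)"
    using q assms by (intro cSup_upper Ssg_bdd_above) auto
  finally show "x \<le> Sup ((\<lambda>q. Ssg q (f q) h v $ i) ` P)" .
qed

lemma Eop_approx:
  assumes "\<forall>q\<in>P. is_Qmatrix q" "\<forall>q\<in>P. \<forall>j. f q $ j \<le> 0" "h \<ge> 0" "P \<noteq> {}" "e > 0"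
  shows "\<exists>qs. (\<forall>i. qs i \<in> P) \<and> (\<forall>i. Eop P f h u $ i - e < Svec qs f h u $ i)"
proof -
  have "\<forall>i. \<exists>q\<in>P. Eop P f h u $ i - e < Ssg q (f q) h u $ i"
  proof
    fix i
    have "Eop P f h u $ i - e < Sup ((\<lambda>q. Ssg q (f q) h u $ i) ` P)"
      using assms(5) unfolding Eop_comp by simp
    then show "\<exists>q\<in>P. Eop P f h u $ i - e < Ssg q (f q) h u $ i"
      using less_cSupD[of "(\<lambda>q. Ssg q (f q) h u $ i) ` P"] assms(4) by auto
  qed
  then obtain qs where "\<forall>i. qs i \<in> P \<and> Eop P f h u $ i - e < Ssg (qs i) (f (qs i)) h u $ i"
    by metis
  then show ?thesis by (auto simp: Svec_comp)
qed

lemma Eop_zero: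
  assumes "P \<noteq> {}"
  shows "Eop P f 0 u = u"
  using assms by (simp add: Eop_def vsup_def Ssg_zero image_constant_conv vec_eq_iff image_image)

lemma increments_Nil[simp]: "increments [] = []" by (simp add: increments_def)
lemma increments_single[simp]: "increments [a] = []" by (simp add: increments_def)
lemma increments_Cons2[simp]: "increments (a # b # L) = (b - a) # increments (b # L)"
  by (simp add: increments_def)

lemma increments_map_add: "increments (map ((+) h) L) = increments L"
  by (induction L rule: induct_list012) auto

lemma increments_sum: "sum_list (increments (a # L)) = last (a # L) - a"
  by (induction L arbitrary: a) auto

lemma increments_range:
  assumes "sorted L" "set L \<subseteq> {0..t}" "x \<in> set (increments L)"
  shows "0 \<le> x \<and> x \<le> t"
  using assms by (induction L rule: induct_list012) auto

definition EP :: "(real^'n^'n) set \<Rightarrow> (real^'n^'n \<Rightarrow> real^'n) \<Rightarrow> real set \<Rightarrow> real^'n \<Rightarrow> real^'n" where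
  "EP P f \<pi> u0 = foldr (\<lambda>h v. Eop P f h v) (increments (sorted_list_of_set \<pi>)) u0"

lemma Epart_EP: "P \<noteq> {} \<Longrightarrow> Epart P f \<pi> u0 = EP P f \<pi> u0"
  by (simp add: Epart_def EP_def Eop_zero)

lemma Sseq_Cons[simp]: "Sseq f ((qs, h) # \<theta>) u = Svec qs f h (Sseq f \<theta> u)"
  by (simp add: Sseq_def)
lemma Sseq_Nil[simp]: "Sseq f [] u = u"
  by (simp add: Sseq_def)

lemma Parts_sorted:
  assumes "\<pi> \<in> Parts t"
  shows "sorted_list_of_set \<pi> \<noteq> [] \<and> hd (sorted_list_of_set \<pi>) = 0 \<and> last (sorted_list_of_set \<pi>) = t
     \<and> set (sorted_list_of_set \<pi>) \<subseteq> {0..t}"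
proof -
  let ?L = "sorted_list_of_set \<pi>"
  have fin: "finite \<pi>" and sub: "\<pi> \<subseteq> {0..}" and z: "0 \<in> \<pi>" and mx: "Max \<pi> = t"
    using assms by (auto simp: Parts_def)
  have setL: "set ?L = \<pi>" using fin by simp
  have ne: "?L \<noteq> []" using fin z by auto
  have so: "sorted ?L" by simp
  obtain a L' where aL: "?L = a # L'" using ne by (cases ?L) auto
  have "a \<le> 0"
  proof -
    have "0 \<in> set (a # L')" using z setL aL by simp
    moreover have "\<forall>y\<in>set L'. a \<le> y" using so aL by (metis sorted_simps(2))
    ultimately show ?thesis by auto
  qed
  moreover have "a \<in> \<pi>" using setL aL by (metis list.set_intros(1))
  ultimately have h0: "hd ?L = 0" using sub aL by force
  have "last ?L \<in> \<pi>" using ne setL last_in_set by blast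
  moreover have "\<forall>x\<in>\<pi>. x \<le> last ?L"
  proof
    fix x assume x: "x \<in> \<pi>"
    have eq: "?L = butlast ?L @ [last ?L]" using ne by simp
    have "sorted (butlast ?L @ [last ?L])" using so eq by metis
    then have "\<forall>y\<in>set (butlast ?L). y \<le> last ?L" by (simp add: sorted_append)
    moreover have "x \<in> set (butlast ?L @ [last ?L])" using x setL eq by metis
    ultimately show "x \<le> last ?L" by auto
  qed
  ultimately have "last ?L = Max \<pi>" using fin by (metis Max_eqI)
  then have "last ?L = t" using mx by simp
  moreover have "set ?L \<subseteq> {0..t}" using setL sub fin mx by auto
  ultimately show ?thesis using ne h0 by simp
qed

lemma sorted_shift:
  assumes "\<pi> \<in> Parts s" "h > 0"
  shows "sorted_list_of_set (insert 0 ((+) h ` \<pi>)) = 0 # map ((+) h) (sorted_list_of_set \<pi>)"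
proof -
  have fin: "finite \<pi>" and sub: "\<pi> \<subseteq> {0..}" using assms by (auto simp: Parts_def)
  let ?L = "sorted_list_of_set \<pi>"
  have "sorted_wrt (<) ?L" by simp
  then have a: "sorted_wrt (<) (map ((+) h) ?L)" by (simp add: sorted_wrt_map)
  have b: "\<forall>x\<in>set (map ((+) h) ?L). 0 < x" using sub fin assms(2) by force
  have "sorted_wrt (<) (0 # map ((+) h) ?L)" using a b by simp
  moreover have "set (0 # map ((+) h) ?L) = insert 0 ((+) h ` \<pi>)" using fin by simp
  moreover have "distinct (0 # map ((+) h) ?L)"
    using \<open>sorted_wrt (<) (0 # map ((+) h) ?L)\<close> strict_sorted_iff by blast
  ultimately show ?thesis
    using sorted_list_of_set_unique[of "insert 0 ((+) h ` \<pi>)" "0 # map ((+) h) ?L"] fin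
    by (metis distinct_card finite.insertI finite_imageI)
qed

lemma EP_shift:
  assumes "\<pi> \<in> Parts s" "h > 0"
  shows "EP P f (insert 0 ((+) h ` \<pi>)) u = Eop P f h (EP P f \<pi> u)"
proof -
  obtain L' where L: "sorted_list_of_set \<pi> = 0 # L'"
    using Parts_sorted[OF assms(1)] by (metis list.collapse)
  show ?thesis unfolding EP_def sorted_shift[OF assms] L
    using increments_map_add[of h "0 # L'"] by simp
qed

lemma Parts_shift:
  assumes "\<pi> \<in> Parts s" "h > 0"
  shows "insert 0 ((+) h ` \<pi>) \<in> Parts (h + s)"
proof -
  have fin: "finite \<pi>" and sub: "\<pi> \<subseteq> {0..}" and z: "0 \<in> \<pi>" and mx: "Max \<pi> = s"
    using assms by (auto simp: Parts_def)
  have ne: "\<pi> \<noteq> {}" using z by auto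
  have "Max ((+) h ` \<pi>) = h + s"
    using Max_add_commute[OF fin ne, of "\<lambda>x. x" h] mx by (simp add: add.commute)
  moreover have "s \<ge> 0" using mx z fin sub by (metis Max_ge)
  ultimately have "Max (insert 0 ((+) h ` \<pi>)) = h + s"
    using fin ne assms(2) by (simp add: Max_insert)
  then show ?thesis using fin sub assms(2) by (auto simp: Parts_def)
qed

lemma foldr_Eop_bound:
  assumes "\<forall>q\<in>P. is_Qmatrix q" "\<forall>q\<in>P. \<forall>j. f q $ j \<le> 0" "P \<noteq> {}"
    "\<forall>h\<in>set hs. h \<ge> 0" "\<And>j. u $ j \<le> c"
  shows "foldr (\<lambda>h v. Eop P f h v) hs u $ i \<le> c"
  using assms(4) proof (induction hs arbitrary: i)
  case Nil then show ?case using assms(5) by simp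
next
  case (Cons h hs) then show ?case using assms by (auto intro!: Eop_le)
qed

lemma Sseq_bound:
  assumes "\<forall>q\<in>P. is_Qmatrix q" "\<forall>q\<in>P. \<forall>j. f q $ j \<le> 0"
    "\<forall>(qs, h)\<in>set \<theta>. (\<forall>i. qs i \<in> P) \<and> h \<ge> 0" "\<And>j. u $ j \<le> c"
  shows "Sseq f \<theta> u $ i \<le> c"
  using assms(3) proof (induction \<theta> arbitrary: i)
  case Nil then show ?case using assms(4) by simp
next
  case (Cons a \<theta>) then show ?case using assms(1,2)
    by (cases a) (auto intro!: Svec_bound[of P])
qed

lemma F1:
  assumes "\<forall>q\<in>P. is_Qmatrix q" "\<forall>q\<in>P. \<forall>j. f q $ j \<le> 0" "P \<noteq> {}"
    "\<forall>h\<in>set hs. h \<ge> 0" "e > 0"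
  shows "\<exists>qss. length qss = length hs \<and> (\<forall>qs\<in>set qss. \<forall>i. qs i \<in> P)
     \<and> (\<forall>i. foldr (\<lambda>h v. Eop P f h v) hs u $ i - e \<le> Sseq f (zip qss hs) u $ i)"
  using assms(4,5) proof (induction hs arbitrary: e)
  case Nil then show ?case by simp
next
  case (Cons h hs)
  let ?w = "foldr (\<lambda>h v. Eop P f h v) hs u"
  obtain qss where qss: "length qss = length hs" "\<forall>qs\<in>set qss. \<forall>i. qs i \<in> P"
    "\<forall>i. ?w $ i - e/2 \<le> Sseq f (zip qss hs) u $ i"
    using Cons.IH[of "e/2"] Cons.prems by auto
  have h0: "h \<ge> 0" using Cons.prems by simp
  obtain qs where qs: "\<forall>i. qs i \<in> P" "\<forall>i. Eop P f h ?w $ i - e/2 < Svec qs f h ?w $ i"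
    using Eop_approx[OF assms(1,2) h0 assms(3), of "e/2" ?w] Cons.prems by auto
  have "\<forall>i. Eop P f h ?w $ i - e \<le> Svec qs f h (Sseq f (zip qss hs) u) $ i"
  proof
    fix i
    have "Svec qs f h ?w $ i - e/2 \<le> Svec qs f h (Sseq f (zip qss hs) u) $ i"
      using qss(3) qs(1) h0 assms(1) by (intro Svec_approx[of P]) auto
    then show "Eop P f h ?w $ i - e \<le> Svec qs f h (Sseq f (zip qss hs) u) $ i"
      using qs(2)[rule_format, of i] by linarith
  qed
  then show ?case using qss qs
    by (intro exI[of _ "qs # qss"]) auto
qed

lemma F2:
  assumes "\<forall>q\<in>P. is_Qmatrix q" "\<forall>q\<in>P. \<forall>j. f q $ j \<le> 0" "P \<noteq> {}"
    "\<forall>(qs, h)\<in>set \<theta>. (\<forall>i. qs i \<in> P) \<and> h \<ge> 0"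
  shows "\<exists>\<pi>\<in>Parts (sum_list (map snd \<theta>)). \<forall>i. Sseq f \<theta> u $ i \<le> EP P f \<pi> u $ i"
  using assms(4) proof (induction \<theta>)
  case Nil
  have "{0} \<in> Parts 0" by (simp add: Parts_def)
  moreover have "EP P f {0} u = u" by (simp add: EP_def)
  ultimately show ?case by (intro bexI[of _ "{0}"]) auto
next
  case (Cons a \<theta>)
  obtain qs h where a: "a = (qs, h)" by (cases a)
  have qs: "\<forall>i. qs i \<in> P" and h0: "h \<ge> 0" using Cons.prems a by auto
  obtain \<pi> where \<pi>: "\<pi> \<in> Parts (sum_list (map snd \<theta>))" "\<forall>i. Sseq f \<theta> u $ i \<le> EP P f \<pi> u $ i"
    using Cons by auto
  show ?case
  proof (cases "h = 0")
    case True
    then show ?thesis using \<pi> a by (auto simp: Svec_zero)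
  next
    case False
    then have hp: "h > 0" using h0 by simp
    have "insert 0 ((+) h ` \<pi>) \<in> Parts (sum_list (map snd (a # \<theta>)))"
      using Parts_shift[OF \<pi>(1) hp] a by simp
    moreover have "\<forall>i. Sseq f (a # \<theta>) u $ i \<le> EP P f (insert 0 ((+) h ` \<pi>)) u $ i"
    proof
      fix i
      have "Sseq f (a # \<theta>) u $ i = Svec qs f h (Sseq f \<theta> u) $ i" using a by simp
      also have "\<dots> \<le> Svec qs f h (EP P f \<pi> u) $ i"
        using \<pi>(2) qs h0 assms(1) by (intro Svec_mono[of P]) auto
      also have "\<dots> \<le> Eop P f h (EP P f \<pi> u) $ i"
        using qs h0 assms by (intro Eop_ge) auto
      also have "\<dots> = EP P f (insert 0 ((+) h ` \<pi>)) u $ i"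
        by (simp only: EP_shift[OF \<pi>(1) hp])
      finally show "Sseq f (a # \<theta>) u $ i \<le> EP P f (insert 0 ((+) h ` \<pi>)) u $ i" .
    qed
    ultimately show ?thesis by blast
  qed
qed

theorem mainTheorem15:
  fixes P :: "(real^'n^'n) set" and f :: "real^'n^'n \<Rightarrow> real^'n"
    and q0 :: "real^'n^'n" and t :: real and u0 :: "real^'n"
  assumes Qm: "\<forall>q\<in>P. is_Qmatrix q"
    and q0: "q0 \<in> P" and supf: "vsup (f ` P) = f q0" and fq0: "f q0 = 0"
    and fin: "\<forall>u::real^'n. \<forall>i. bdd_above ((\<lambda>q. (q *v u + f q) $ i) ` P)"
    and t: "t \<ge> 0"
  shows "Nisio P f t u0 = vsup ((\<lambda>\<pi>. Epart P f \<pi> u0) ` Parts t)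
       \<and> vsup ((\<lambda>\<pi>. Epart P f \<pi> u0) ` Parts t) = vsup ((\<lambda>\<theta>. Sseq f \<theta> u0) ` Qseqs P t)"
proof
  show "Nisio P f t u0 = vsup ((\<lambda>\<pi>. Epart P f \<pi> u0) ` Parts t)" by (simp add: Nisio_def)
next
  have Pne: "P \<noteq> {}" using q0 by auto
  have fle: "\<forall>q\<in>P. \<forall>j. f q $ j \<le> 0"
  proof (intro ballI allI)
    fix q j assume q: "q \<in> P"
    have bdd: "bdd_above ((\<lambda>q. f q $ j) ` P)" using fin[rule_format, of 0 j] by simp
    have "f q $ j \<le> Sup ((\<lambda>q. f q $ j) ` P)" using q bdd by (intro cSup_upper) auto
    also have "\<dots> = vsup (f ` P) $ j" by (simp add: vsup_def image_image)
    also have "\<dots> = 0" using supf fq0 by simp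
    finally show "f q $ j \<le> 0" .
  qed
  obtain c where c: "\<forall>j. u0 $ j \<le> c" using ex_bound by blast
  show "vsup ((\<lambda>\<pi>. Epart P f \<pi> u0) ` Parts t) = vsup ((\<lambda>\<theta>. Sseq f \<theta> u0) ` Qseqs P t)"
    unfolding vsup_def vec_eq_iff image_image
  proof (intro allI, simp only: vec_lambda_beta)
    fix i
    let ?SA = "(\<lambda>\<pi>. Epart P f \<pi> u0 $ i) ` Parts t"
    let ?SB = "(\<lambda>\<theta>. Sseq f \<theta> u0 $ i) ` Qseqs P t"
    have incr: "\<forall>h\<in>set (increments (sorted_list_of_set \<pi>)). 0 \<le> h \<and> h \<le> t" if "\<pi> \<in> Parts t" for \<pi>
    proof
      fix h assume h: "h \<in> set (increments (sorted_list_of_set \<pi>))"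
      have "set (sorted_list_of_set \<pi>) \<subseteq> {0..t}" using Parts_sorted[OF that] by blast
      then show "0 \<le> h \<and> h \<le> t" using h by (intro increments_range[of "sorted_list_of_set \<pi>" t h]) auto
    qed
    have "{0, t} \<in> Parts t" using t by (auto simp: Parts_def)
    then have neA: "?SA \<noteq> {}" by blast
    have "[(\<lambda>_. q0, t)] \<in> Qseqs P t" using t q0 by (auto simp: Qseqs_def)
    then have neB: "?SB \<noteq> {}" by blast
    have bddA: "bdd_above ?SA"
    proof (rule bdd_aboveI[of _ c])
      fix x assume "x \<in> ?SA"
      then obtain \<pi> where \<pi>: "\<pi> \<in> Parts t" "x = Epart P f \<pi> u0 $ i" by auto
      have "Epart P f \<pi> u0 $ i \<le> c" unfolding Epart_EP[OF Pne] EP_def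
        using incr[OF \<pi>(1)] Qm fle Pne c by (intro foldr_Eop_bound[of P]) auto
      then show "x \<le> c" using \<pi>(2) by simp
    qed
    have bddB: "bdd_above ?SB"
    proof (rule bdd_aboveI[of _ c])
      fix x assume "x \<in> ?SB"
      then obtain \<theta> where \<theta>: "\<theta> \<in> Qseqs P t" "x = Sseq f \<theta> u0 $ i" by auto
      have "Sseq f \<theta> u0 $ i \<le> c"
        using Qm fle c \<theta>(1) by (intro Sseq_bound[of P]) (auto simp: Qseqs_def)
      then show "x \<le> c" using \<theta>(2) by simp
    qed
    show "Sup ?SA = Sup ?SB"
    proof (rule antisym)
      show "Sup ?SA \<le> Sup ?SB"
      proof (rule cSup_least[OF neA])
        fix x assume "x \<in> ?SA"
        then obtain \<pi> where \<pi>: "\<pi> \<in> Parts t" "x = Epart P f \<pi> u0 $ i" by auto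
        let ?L = "sorted_list_of_set \<pi>"
        let ?hs = "0 # increments ?L"
        have hsr: "\<forall>h\<in>set ?hs. 0 \<le> h \<and> h \<le> t" using incr[OF \<pi>(1)] t by auto
        have sumhs: "sum_list ?hs = t"
        proof -
          have "?L \<noteq> []" using Parts_sorted[OF \<pi>(1)] by blast
          then have "?L = hd ?L # tl ?L" by simp
          then have "sum_list (increments ?L) = last ?L - hd ?L"
            by (metis increments_sum)
          then show ?thesis using Parts_sorted[OF \<pi>(1)] by simp
        qed
        have fx: "foldr (\<lambda>h v. Eop P f h v) ?hs u0 = Epart P f \<pi> u0"
          by (simp add: Eop_zero[OF Pne] Epart_EP[OF Pne] EP_def)
        show "x \<le> Sup ?SB"
        proof (rule field_le_epsilon)
          fix e :: real assume e: "e > 0"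
          obtain qss where qss: "length qss = length ?hs" "\<forall>qs\<in>set qss. \<forall>i. qs i \<in> P"
            "\<forall>i. foldr (\<lambda>h v. Eop P f h v) ?hs u0 $ i - e \<le> Sseq f (zip qss ?hs) u0 $ i"
            using F1[OF Qm fle Pne _ e, of ?hs u0] hsr by blast
          have "zip qss ?hs \<in> Qseqs P t"
            unfolding Qseqs_def
          proof (intro CollectI conjI)
            show "zip qss ?hs \<noteq> []" using qss(1) by (cases qss) auto
            show "\<forall>(qs, h)\<in>set (zip qss ?hs). (\<forall>i. qs i \<in> P) \<and> h \<in> {0..t}"
            proof (intro ballI, clarify)
              fix a b assume ab: "(a, b) \<in> set (zip qss ?hs)"
              have "a \<in> set qss" using ab by (rule set_zip_leftD)
              moreover have "b \<in> set ?hs" using ab by (rule set_zip_rightD)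
              ultimately show "(\<forall>i. a i \<in> P) \<and> b \<in> {0..t}" using qss(2) hsr by auto
            qed
            show "sum_list (map snd (zip qss ?hs)) = t" using qss(1) sumhs by simp
          qed
          then have "Sseq f (zip qss ?hs) u0 $ i \<le> Sup ?SB"
            using bddB by (intro cSup_upper) auto
          then show "x \<le> Sup ?SB + e" using qss(3)[rule_format, of i] fx \<pi>(2) by simp
        qed
      qed
    next
      show "Sup ?SB \<le> Sup ?SA"
      proof (rule cSup_least[OF neB])
        fix x assume "x \<in> ?SB"
        then obtain \<theta> where \<theta>: "\<theta> \<in> Qseqs P t" "x = Sseq f \<theta> u0 $ i" by auto
        have th: "\<forall>(qs, h)\<in>set \<theta>. (\<forall>i. qs i \<in> P) \<and> h \<ge> 0" and st: "sum_list (map snd \<theta>) = t"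
          using \<theta>(1) by (auto simp: Qseqs_def)
        obtain \<pi> where \<pi>: "\<pi> \<in> Parts t" "\<forall>i. Sseq f \<theta> u0 $ i \<le> EP P f \<pi> u0 $ i"
          using F2[OF Qm fle Pne th, of u0] st by auto
        have "x \<le> Epart P f \<pi> u0 $ i" using \<pi>(2) \<theta>(2) Epart_EP[OF Pne] by simp
        also have "\<dots> \<le> Sup ?SA" using \<pi>(1) bddA by (intro cSup_upper) auto
        finally show "x \<le> Sup ?SA" .
      qed
    qed
  qed
qed

end
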